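(* Let $P\subset\mathbb R^3$ be a simple $3$-polytope with irredundant representation $P=\{\mathbf{x}\in\mathbb R^3\colon \mathbf{a}_i\mathbf{x}+b_i\geqslant 0,\ i=1,\dots,m\}$, and let $\Gamma$ be a subgraph without isolated vertices of the edge-vertex graph $G(P)$ of $P$. Then the graph-truncation $P_{\Gamma}$ is a simple polytope if and only if the graph $\Gamma$ has no vertices of valency $2$.
   Context: A polytope $P=\{\mathbf{x}\in \mathbb R^n\colon \mathbf{a}_i\mathbf{x}+b_i\geqslant 0, i=1,\dots,m\}$ with irredundant representation has facets $F_i=P\cap\{\mathbf{a}_i\mathbf{x}+b_i=0\}$. An $n$-polytope is simple if every vertex lies in exactly $n$ facets. The edge-vertex graph $G(P)$ has the vertices of $P$ as vertices and the edges of $P$ as edges. Graph-truncation: for each edge $E_{i,j}=F_i\cap F_j$ of $P$ in $\Gamma$ consider the halfspace $\mathcal{H}^+_{ij,\varepsilon}=\{\mathbf{x}\in\mathbb R^3\colon(\mathbf{a}_i+\mathbf{a}_j)\mathbf{x}+(b_i+b_j)\geqslant\varepsilon\}$ and set $P_{\Gamma,\varepsilon}=P\cap\bigcap_{E_{i,j}\in\Gamma}\mathcal{H}^+_{ij,\varepsilon}$. For all sufficiently small $\varepsilon>0$ the combinatorial type of $P_{\Gamma,\varepsilon}$ does not depend on $\varepsilon$; this combinatorial polytope is denoted $P_\Gamma$ (the graph-truncation of $P$ along $\Gamma$). Its facets correspond bijectively to the facets $F_i$ of $P$ together with the edges $F_i\cap F_j\in\Gamma$. *)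

theory Defs
  imports "HOL-Analysis.Analysis"
begin

definition simple_polytope :: "'a::euclidean_space set \<Rightarrow> bool" where
  "simple_polytope P \<longleftrightarrow> polytope P \<and>
     (\<forall>v. v extreme_point_of P \<longrightarrow> int (card {F. F facet_of P \<and> v \<in> F}) = aff_dim P)"

definition ineq_poly :: "nat \<Rightarrow> (nat \<Rightarrow> real^3) \<Rightarrow> (nat \<Rightarrow> real) \<Rightarrow> (real^3) set" where
  "ineq_poly m a b = {x. \<forall>i<m. a i \<bullet> x + b i \<ge> 0}"

definition irredundant :: "nat \<Rightarrow> (nat \<Rightarrow> real^3) \<Rightarrow> (nat \<Rightarrow> real) \<Rightarrow> bool" where
  "irredundant m a b \<longleftrightarrow>
     (\<forall>k<m. {x. \<forall>i<m. i \<noteq> k \<longrightarrow> a i \<bullet> x + b i \<ge> 0} \<noteq> ineq_poly m a b)"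

definition facet_set :: "(nat \<Rightarrow> real^3) \<Rightarrow> (nat \<Rightarrow> real) \<Rightarrow> (real^3) set \<Rightarrow> nat \<Rightarrow> (real^3) set" where
  "facet_set a b P i = P \<inter> {x. a i \<bullet> x + b i = 0}"

text \<open>The truncated polytope P_{Gamma,eps}; Gamma is a set of index pairs (i,j), i<j,
  each standing for the edge F_i cap F_j.\<close>
definition graph_trunc ::
  "(nat \<Rightarrow> real^3) \<Rightarrow> (nat \<Rightarrow> real) \<Rightarrow> (real^3) set \<Rightarrow> (nat \<times> nat) set \<Rightarrow> real \<Rightarrow> (real^3) set" where
  "graph_trunc a b P \<Gamma> \<epsilon> = P \<inter> {x. \<forall>(i,j)\<in>\<Gamma>. (a i + a j) \<bullet> x + (b i + b j) \<ge> \<epsilon>}"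

definition valency ::
  "(nat \<Rightarrow> real^3) \<Rightarrow> (nat \<Rightarrow> real) \<Rightarrow> (real^3) set \<Rightarrow> (nat \<times> nat) set \<Rightarrow> real^3 \<Rightarrow> nat" where
  "valency a b P \<Gamma> v = card {(i,j)\<in>\<Gamma>. v \<in> facet_set a b P i \<inter> facet_set a b P j}"

end

theory Submission
  imports Defs
begin


definition polyset :: "'i set \<Rightarrow> ('i \<Rightarrow> real^3) \<Rightarrow> ('i \<Rightarrow> real) \<Rightarrow> (real^3) set" where
  "polyset K c d = {x. \<forall>k\<in>K. c k \<bullet> x + d k \<ge> 0}"

definition tight :: "'i set \<Rightarrow> ('i \<Rightarrow> real^3) \<Rightarrow> ('i \<Rightarrow> real) \<Rightarrow> real^3 \<Rightarrow> 'i set" where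
  "tight K c d x = {k\<in>K. c k \<bullet> x + d k = 0}"

lemma polyset_Inter: "polyset K c d = (\<Inter>k\<in>K. {x. c k \<bullet> x \<ge> - d k})"
  unfolding polyset_def by force

lemma convex_polyset: "convex (polyset K c d)"
  unfolding polyset_Inter by (intro convex_INT convex_halfspace_ge)

lemma closed_polyset: "closed (polyset K c d)"
  unfolding polyset_Inter by (auto intro!: closed_INT closed_halfspace_ge)

lemma polyhedron_polyset: "finite K \<Longrightarrow> polyhedron (polyset K c d)"
  unfolding polyset_Inter by (intro polyhedron_Inter) (auto intro: polyhedron_halfspace_ge)

lemma DIM3: "DIM(real^3) = 3" by simp

lemma open_strict: "finite A \<Longrightarrow> open {x::real^3. \<forall>k\<in>A. c k \<bullet> x + d k > 0}"
proof -
  assume "finite A"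
  have "{x::real^3. \<forall>k\<in>A. c k \<bullet> x + d k > 0} = (\<Inter>k\<in>A. {x. c k \<bullet> x > - d k})" by force
  then show ?thesis using \<open>finite A\<close> by (simp add: open_INT open_halfspace_gt)
qed

lemma orth_span:
  assumes "span (c ` T) = UNIV" "\<forall>k\<in>T. c k \<bullet> v = 0"
  shows "v = (0::real^3)"
proof -
  have "orthogonal v v"
    by (rule orthogonal_to_span[of v "c ` T" v]) (use assms in \<open>auto simp: orthogonal_def inner_commute\<close>)
  then show ?thesis by (simp add: orthogonal_def)
qed

lemma eventually_small:
  fixes s :: real assumes "s > 0"
  shows "eventually (\<lambda>t. t * C < s) (at_right 0)"
proof -
  have "((\<lambda>t. t * C) \<longlongrightarrow> 0 * C) (at_right (0::real))"
    by (intro tendsto_intros)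
  then show ?thesis using assms by (auto dest: order_tendstoD(2))
qed

lemma eventually_at_right_obtain:
  assumes "eventually P (at_right (0::real))"
  obtains t where "t > 0" "P t"
proof -
  from assms obtain b where "b > 0" "\<forall>y>0. y < b \<longrightarrow> P y" by (auto simp: eventually_at_right_field)
  then show ?thesis using that[of "b/2"] by auto
qed

lemma extreme_imp_span:
  assumes "finite K" "x extreme_point_of polyset K c d"
  shows "span (c ` tight K c d x) = UNIV"
proof (rule ccontr)
  assume "span (c ` tight K c d x) \<noteq> UNIV"
  then obtain w where w: "w \<noteq> 0" "\<forall>y\<in>span (c ` tight K c d x). w \<bullet> y = 0"
    using span_not_UNIV_orthogonal by blast
  have xQ: "x \<in> polyset K c d" using assms(2) extreme_point_of_def by blast
  have wt: "c k \<bullet> w = 0" if "k \<in> tight K c d x" for k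
    using w(2) that span_base[of "c k" "c ` tight K c d x"] by (auto simp: inner_commute)
  have "\<forall>k\<in>K - tight K c d x. eventually (\<lambda>t. t * \<bar>c k \<bullet> w\<bar> < c k \<bullet> x + d k) (at_right 0)"
  proof
    fix k assume k: "k \<in> K - tight K c d x"
    then have "c k \<bullet> x + d k > 0" using xQ by (auto simp: polyset_def tight_def le_less)
    then show "eventually (\<lambda>t. t * \<bar>c k \<bullet> w\<bar> < c k \<bullet> x + d k) (at_right 0)"
      by (rule eventually_small)
  qed
  then have "eventually (\<lambda>t. \<forall>k\<in>K - tight K c d x. t * \<bar>c k \<bullet> w\<bar> < c k \<bullet> x + d k) (at_right 0)"
    using assms(1) by (intro eventually_ball_finite) auto
  then obtain t where t: "t > 0" "\<forall>k\<in>K - tight K c d x. t * \<bar>c k \<bullet> w\<bar> < c k \<bullet> x + d k"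
    by (rule eventually_at_right_obtain)
  have inQ: "x + s *\<^sub>R w \<in> polyset K c d" if "\<bar>s\<bar> = t" for s
    unfolding polyset_def
  proof (intro CollectI ballI)
    fix k assume k: "k \<in> K"
    show "c k \<bullet> (x + s *\<^sub>R w) + d k \<ge> 0"
    proof (cases "k \<in> tight K c d x")
      case True
      then show ?thesis using wt[OF True] xQ k by (auto simp: polyset_def inner_add_right)
    next
      case False
      then have "t * \<bar>c k \<bullet> w\<bar> < c k \<bullet> x + d k" using t k by auto
      moreover have "\<bar>s * (c k \<bullet> w)\<bar> = t * \<bar>c k \<bullet> w\<bar>" using that by (simp add: abs_mult)
      ultimately show ?thesis by (auto simp: inner_add_right)
    qed
  qed
  have "(x + (-t) *\<^sub>R w) + (x + t *\<^sub>R w) = (2::real) *\<^sub>R x" by (simp add: scaleR_2)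
  then have "x = midpoint (x + (-t) *\<^sub>R w) (x + t *\<^sub>R w)"
    unfolding midpoint_def by simp
  moreover have "x + (-t) *\<^sub>R w \<noteq> x + t *\<^sub>R w"
  proof
    assume "x + (-t) *\<^sub>R w = x + t *\<^sub>R w"
    then have "(-t) *\<^sub>R w = t *\<^sub>R w" by (rule add_left_imp_eq)
    then have "-t = t \<or> w = 0" by (rule scaleR_cancel_right[THEN iffD1])
    then show False using w(1) t(1) by auto
  qed
  ultimately have "x \<in> open_segment (x + (-t) *\<^sub>R w) (x + t *\<^sub>R w)"
    by (metis midpoint_in_open_segment)
  moreover have "x + (-t) *\<^sub>R w \<in> polyset K c d" "x + t *\<^sub>R w \<in> polyset K c d"
    using inQ[of "-t"] inQ[of t] t(1) by auto
  ultimately show False using assms(2) unfolding extreme_point_of_def by blast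
qed

lemma span_imp_extreme:
  assumes "x \<in> polyset K c d" "span (c ` tight K c d x) = UNIV"
  shows "x extreme_point_of polyset K c d"
  unfolding extreme_point_of_def
proof (intro conjI assms(1) ballI notI)
  fix p q assume pq: "p \<in> polyset K c d" "q \<in> polyset K c d" "x \<in> open_segment p q"
  then obtain u where u: "p \<noteq> q" "0 < u" "u < 1" "x = (1 - u) *\<^sub>R p + u *\<^sub>R q"
    by (auto simp: in_segment)
  have "c k \<bullet> (p - q) = 0" if k: "k \<in> tight K c d x" for k
  proof -
    have e: "c k \<bullet> x + d k = 0" "k \<in> K" using k by (auto simp: tight_def)
    have hp: "c k \<bullet> p + d k \<ge> 0" "c k \<bullet> q + d k \<ge> 0" using pq e(2) by (auto simp: polyset_def)
    have "c k \<bullet> x = (1 - u) * (c k \<bullet> p) + u * (c k \<bullet> q)"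
      unfolding u(4) by (simp add: inner_add_right)
    then have "c k \<bullet> x + d k = (1 - u) * (c k \<bullet> p + d k) + u * (c k \<bullet> q + d k)"
      by (simp add: algebra_simps)
    then have "(1 - u) * (c k \<bullet> p + d k) + u * (c k \<bullet> q + d k) = 0" using e by simp
    moreover have "(1 - u) * (c k \<bullet> p + d k) \<ge> 0" "u * (c k \<bullet> q + d k) \<ge> 0"
      using hp u by auto
    ultimately have "(1 - u) * (c k \<bullet> p + d k) = 0" "u * (c k \<bullet> q + d k) = 0" by linarith+
    then have "c k \<bullet> p + d k = 0" "c k \<bullet> q + d k = 0" using u by auto
    then show ?thesis by (simp add: inner_diff_right)
  qed
  then have "p - q = 0" using orth_span[OF assms(2)] by blast
  then show False using u(1) by simp
qed

definition fset :: "'i set \<Rightarrow> ('i \<Rightarrow> real^3) \<Rightarrow> ('i \<Rightarrow> real) \<Rightarrow> 'i \<Rightarrow> (real^3) set" where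
  "fset K c d k = polyset K c d \<inter> {x. c k \<bullet> x + d k = 0}"

lemma aff_dim_polyset:
  assumes fin: "finite K" and p: "\<forall>k\<in>K. c k \<bullet> p + d k > 0"
  shows "aff_dim (polyset K c d) = 3"
proof -
  let ?O = "{x::real^3. \<forall>k\<in>K. c k \<bullet> x + d k > 0}"
  have "open ?O" using fin by (rule open_strict)
  moreover have "?O \<noteq> {}" using p by auto
  ultimately have O3: "aff_dim ?O = 3" by (simp add: aff_dim_open)
  have "?O \<subseteq> polyset K c d" by (auto simp: polyset_def less_imp_le)
  from aff_dim_subset[OF this] O3 have "3 \<le> aff_dim (polyset K c d)" by simp
  moreover have "aff_dim (polyset K c d) \<le> 3" using aff_dim_le_DIM[of "polyset K c d"] by simp
  ultimately show ?thesis by simp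
qed

lemma interior_polyset:
  assumes fin: "finite K" and q: "q \<in> polyset K c d" and nt: "tight K c d q = {}"
  shows "q \<in> interior (polyset K c d)"
proof -
  let ?O = "{x::real^3. \<forall>k\<in>K. c k \<bullet> x + d k > 0}"
  have "open ?O" using fin by (rule open_strict)
  moreover have "?O \<subseteq> polyset K c d" by (auto simp: polyset_def less_imp_le)
  moreover have "q \<in> ?O" using q nt by (auto simp: polyset_def tight_def le_less)
  ultimately show ?thesis by (meson interior_maximal subsetD)
qed

lemma fset_face: "fset K c d k face_of polyset K c d" if "k \<in> K"
proof -
  have "fset K c d k = polyset K c d \<inter> {x. c k \<bullet> x = - d k}"
    by (auto simp: fset_def)
  also have "\<dots> face_of polyset K c d"
    by (rule face_of_Int_supporting_hyperplane_ge) (use that convex_polyset[of K c d] in \<open>auto simp: polyset_def\<close>)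
  finally show ?thesis .
qed

lemma fset_facet:
  assumes fin: "finite K" and nz: "\<forall>k\<in>K. c k \<noteq> 0"
    and p: "\<forall>k\<in>K. c k \<bullet> p + d k > 0"
    and w: "c k \<bullet> w + d k = 0" "\<forall>l\<in>K. l \<noteq> k \<longrightarrow> c l \<bullet> w + d l > 0"
    and k: "k \<in> K"
  shows "fset K c d k facet_of polyset K c d"
proof -
  let ?H = "{x. c k \<bullet> x = - d k}"
  let ?O = "{x::real^3. \<forall>l\<in>K-{k}. c l \<bullet> x + d l > 0}"
  have aH: "aff_dim ?H = 2" using nz k by simp
  have "open ?O" using fin by (intro open_strict) auto
  moreover have "w \<in> ?H \<inter> ?O" using w by auto
  ultimately have HO: "aff_dim (?H \<inter> ?O) = 2" using aH by (subst aff_dim_convex_Int_open) (auto simp: convex_hyperplane)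
  have HOs: "?H \<inter> ?O \<subseteq> fset K c d k"
  proof
    fix x assume x: "x \<in> ?H \<inter> ?O"
    have "c l \<bullet> x + d l \<ge> 0" if "l \<in> K" for l
    proof (cases "l = k")
      case True then show ?thesis using x by simp
    next
      case False then show ?thesis using x that by (auto intro: less_imp_le)
    qed
    then show "x \<in> fset K c d k" using x by (auto simp: fset_def polyset_def)
  qed
  have "2 \<le> aff_dim (fset K c d k)" using aff_dim_subset[OF HOs] HO by simp
  moreover have "fset K c d k \<subseteq> ?H" by (auto simp: fset_def)
  then have "aff_dim (fset K c d k) \<le> 2" using aH aff_dim_subset by metis
  ultimately have "aff_dim (fset K c d k) = 2" by simp
  moreover have "w \<in> fset K c d k" using w by (auto simp: fset_def polyset_def less_imp_le)
  ultimately show ?thesis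
    unfolding facet_of_def using fset_face[OF k] aff_dim_polyset[OF fin p] by auto
qed

lemma facet_is_fset:
  assumes fin: "finite K" and nz: "\<forall>k\<in>K. c k \<noteq> 0"
    and p: "\<forall>k\<in>K. c k \<bullet> p + d k > 0"
    and F: "F facet_of polyset K c d"
  shows "\<exists>k\<in>K. F = fset K c d k"
proof -
  let ?Q = "polyset K c d"
  have Fface: "F face_of ?Q" and Fne: "F \<noteq> {}" and Fd: "aff_dim F = 2"
    using F aff_dim_polyset[OF fin p] by (auto simp: facet_of_def)
  have "convex F" using Fface face_of_imp_convex by blast
  then obtain q where q: "q \<in> rel_interior F" using Fne rel_interior_eq_empty by blast
  then have qQ: "q \<in> ?Q" using Fface face_of_imp_subset rel_interior_subset by blast
  have "tight K c d q \<noteq> {}"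
  proof
    assume "tight K c d q = {}"
    then have "q \<in> rel_interior ?Q" using interior_polyset[OF fin qQ] interior_subset_rel_interior by blast
    moreover have "q \<in> F" using q rel_interior_subset by blast
    ultimately have "?Q \<subseteq> F" using subset_of_face_of[OF Fface, of ?Q] by blast
    then have "F = ?Q" using Fface face_of_imp_subset by blast
    then show False using F by simp
  qed
  then obtain k where k: "k \<in> tight K c d q" by blast
  then have kK: "k \<in> K" and qk: "q \<in> fset K c d k" using qQ by (auto simp: tight_def fset_def)
  have FQ: "F \<subseteq> ?Q" using Fface face_of_imp_subset by blast
  have Fsub: "F \<subseteq> fset K c d k"
    using subset_of_face_of[OF fset_face[OF kK] FQ] qk q by blast
  have fsub: "fset K c d k \<subseteq> ?Q" by (auto simp: fset_def)
  have "F = fset K c d k"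
  proof (rule ccontr)
    assume ne: "F \<noteq> fset K c d k"
    have "F face_of fset K c d k" using face_of_subset[OF Fface Fsub fsub] .
    moreover have "convex (fset K c d k)" using fset_face[OF kK] face_of_imp_convex by blast
    ultimately have "aff_dim F < aff_dim (fset K c d k)" using ne face_of_aff_dim_lt by blast
    moreover have "aff_dim (fset K c d k) \<le> 2"
    proof -
      have "fset K c d k \<subseteq> {x. c k \<bullet> x = - d k}" by (auto simp: fset_def)
      moreover have "aff_dim {x. c k \<bullet> x = - d k} = 2" using nz kK by simp
      ultimately show ?thesis using aff_dim_subset by metis
    qed
    ultimately show False using Fd by simp
  qed
  then show ?thesis using kK by blast
qed

lemma card_facets_polyset:
  assumes fin: "finite K" and nz: "\<forall>k\<in>K. c k \<noteq> 0"
    and p: "\<forall>k\<in>K. c k \<bullet> p + d k > 0"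
    and wit: "\<forall>k\<in>K. \<exists>w. c k \<bullet> w + d k = 0 \<and> (\<forall>l\<in>K. l \<noteq> k \<longrightarrow> c l \<bullet> w + d l > 0)"
    and x: "x \<in> polyset K c d"
  shows "card {F. F facet_of polyset K c d \<and> x \<in> F} = card (tight K c d x)"
proof -
  have eq: "{F. F facet_of polyset K c d \<and> x \<in> F} = fset K c d ` tight K c d x"
  proof (intro equalityI subsetI)
    fix F assume "F \<in> {F. F facet_of polyset K c d \<and> x \<in> F}"
    then obtain k where "k \<in> K" "F = fset K c d k" "x \<in> F"
      using facet_is_fset[OF fin nz p] by blast
    then show "F \<in> fset K c d ` tight K c d x" by (auto simp: tight_def fset_def)
  next
    fix F assume "F \<in> fset K c d ` tight K c d x"
    then obtain k where k: "k \<in> K" "F = fset K c d k" "c k \<bullet> x + d k = 0" by (auto simp: tight_def)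
    then obtain w where "c k \<bullet> w + d k = 0" "\<forall>l\<in>K. l \<noteq> k \<longrightarrow> c l \<bullet> w + d l > 0" using wit by blast
    then have "F facet_of polyset K c d" using fset_facet[OF fin nz p] k by blast
    then show "F \<in> {F. F facet_of polyset K c d \<and> x \<in> F}" using k x by (auto simp: fset_def)
  qed
  have "inj_on (fset K c d) (tight K c d x)"
  proof (rule inj_onI)
    fix k l assume kl: "k \<in> tight K c d x" "l \<in> tight K c d x" "fset K c d k = fset K c d l"
    show "k = l"
    proof (rule ccontr)
      assume "k \<noteq> l"
      obtain w where w: "c k \<bullet> w + d k = 0" "\<forall>m\<in>K. m \<noteq> k \<longrightarrow> c m \<bullet> w + d m > 0"
        using wit kl by (auto simp: tight_def)
      have "w \<in> fset K c d k" using w by (auto simp: fset_def polyset_def less_imp_le)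
      then have "w \<in> fset K c d l" using kl by simp
      then show False using w \<open>k \<noteq> l\<close> kl by (auto simp: fset_def tight_def)
    qed
  qed
  then show ?thesis using eq by (simp add: card_image)
qed




lemma core3:
  fixes X Y Z e :: real
  assumes "X \<ge> 0" "Y \<ge> 0" "Z \<ge> 0" "e > 0"
    and "gxy \<longrightarrow> X + Y \<ge> e" "gxz \<longrightarrow> X + Z \<ge> e" "gyz \<longrightarrow> Y + Z \<ge> e"
    and "of_bool gxy + of_bool gxz + of_bool gyz \<noteq> (2::nat)"
  shows "of_bool (X = 0) + of_bool (Y = 0) + of_bool (Z = 0)
       + of_bool (gxy \<and> X + Y = e) + of_bool (gxz \<and> X + Z = e) + of_bool (gyz \<and> Y + Z = e) \<le> (3::nat)"
  using assms by (cases gxy; cases gxz; cases gyz) (auto split: if_splits)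

lemma card_filter_insert:
  assumes "finite A" "a \<notin> A"
  shows "card {k\<in>insert a A. P k} = of_bool (P a) + card {k\<in>A. P k}"
proof (cases "P a")
  case True
  then have "{k\<in>insert a A. P k} = insert a {k\<in>A. P k}" by auto
  then show ?thesis using assms True by simp
next
  case False
  then have "{k\<in>insert a A. P k} = {k\<in>A. P k}" by auto
  then show ?thesis using False by simp
qed

lemma card_filter_empty: "card {k\<in>{}. P k} = 0" by simp

lemma card_filter_1: "card {k\<in>{x}. P k} = of_bool (P x)"
  using card_filter_insert[of "{}" x P] by simp

lemma card_filter_2: "x \<noteq> y \<Longrightarrow> card {k\<in>{x,y}. P k} = of_bool (P x) + of_bool (P y)"
  using card_filter_insert[of "{y}" x P] card_filter_1[of y P] by simp

lemma card_filter_3: "x \<noteq> y \<Longrightarrow> x \<noteq> z \<Longrightarrow> y \<noteq> z \<Longrightarrow>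
  card {k\<in>{x,y,z}. P k} = of_bool (P x) + of_bool (P y) + of_bool (P z)"
  using card_filter_insert[of "{y,z}" x P] card_filter_2[of y z P] by simp

lemma sorted_elems:
  fixes S :: "nat set"
  assumes "finite S" "card S \<le> 3"
  shows "S = {} \<or> (\<exists>x. S = {x}) \<or> (\<exists>x y. x < y \<and> S = {x,y}) \<or> (\<exists>x y z. x < y \<and> y < z \<and> S = {x,y,z})"
proof -
  define xs where "xs = sorted_list_of_set S"
  have S: "S = set xs" and srt: "sorted_wrt (<) xs" and len: "length xs = card S"
    using assms by (auto simp: xs_def)
  consider "xs = []" | x where "xs = [x]" | x y where "xs = [x,y]" | x y z where "xs = [x,y,z]"
    using len assms(2)
    by (metis (no_types, lifting) One_nat_def length_0_conv length_Suc_conv le_SucE numeral_3_eq_3 numeral_2_eq_2 le_zero_eq)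
  then show ?thesis
  proof cases
    case 1 then show ?thesis using S by simp
  next
    case 2 then show ?thesis using S by simp
  next
    case (3 x y)
    then have "S = {x,y}" "x < y" using S srt by auto
    then show ?thesis by blast
  next
    case (4 x y z)
    then have "S = {x,y,z}" "x < y" "y < z" using S srt by auto
    then show ?thesis by blast
  qed
qed

lemma comb:
  fixes S :: "nat set" and G :: "(nat\<times>nat) set" and Y :: "nat \<Rightarrow> real"
  assumes fin: "finite S" and cS: "card S \<le> 3"
    and Glt: "\<forall>(i,j)\<in>G. i < j"
    and v2: "card S = 3 \<longrightarrow> card {(i,j)\<in>G. i\<in>S \<and> j\<in>S} \<noteq> 2"
    and nn: "\<forall>i\<in>S. Y i \<ge> 0" and e: "e > 0"
    and cut: "\<forall>(i,j)\<in>G. i\<in>S \<longrightarrow> j\<in>S \<longrightarrow> Y i + Y j \<ge> e"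
  shows "card {k\<in>S. Y k = 0} + card {(i,j)\<in>G. i\<in>S \<and> j\<in>S \<and> Y i + Y j = e} \<le> 3"
proof -
  consider "S = {}" | x where "S = {x}" | x y where "x < y" "S = {x,y}"
    | x y z where "x < y" "y < z" "S = {x,y,z}"
    using sorted_elems[OF fin cS] by blast
  then show ?thesis
  proof cases
    case 1 then show ?thesis by simp
  next
    case (2 x)
    have e0: "{(i,j)\<in>G. i\<in>S \<and> j\<in>S \<and> Y i + Y j = e} = {}" using 2 Glt by auto
    have c0: "card {(i,j)\<in>G. i\<in>S \<and> j\<in>S \<and> Y i + Y j = e} = 0" unfolding e0 by simp
    have "card {k\<in>S. Y k = 0} \<le> 1"
      unfolding 2 card_filter_1 by simp
    then show ?thesis using c0 by linarith
  next
    case (3 x y)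
    have C: "{(i,j)\<in>G. i\<in>S \<and> j\<in>S \<and> Y i + Y j = e} = {g\<in>{(x,y)}. g \<in> G \<and> Y x + Y y = e}"
      using 3 Glt by auto
    have "card {k\<in>S. Y k = 0} + card {(i,j)\<in>G. i\<in>S \<and> j\<in>S \<and> Y i + Y j = e}
       = of_bool (Y x = 0) + of_bool (Y y = 0) + of_bool ((x,y) \<in> G \<and> Y x + Y y = e)"
    proof -
      have "card {k\<in>S. Y k = 0} = of_bool (Y x = 0) + of_bool (Y y = 0)"
        unfolding 3(2) by (rule card_filter_2) (use 3 in auto)
      moreover have "card {g\<in>{(x,y)}. g \<in> G \<and> Y x + Y y = e} = of_bool ((x,y) \<in> G \<and> Y x + Y y = e)"
        by (rule card_filter_1)
      ultimately show ?thesis unfolding C by simp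
    qed
    also have "\<dots> \<le> 3"
    proof -
      have "of_bool (Y x = 0) + of_bool (Y y = 0) + of_bool ((1::real) = 0)
       + of_bool ((x,y) \<in> G \<and> Y x + Y y = e) + of_bool (False \<and> Y x + 1 = e) + of_bool (False \<and> Y y + 1 = e) \<le> (3::nat)"
      proof (rule core3[OF _ _ _ e])
        show "Y x \<ge> 0" "Y y \<ge> 0" using nn 3 by auto
        show "(x,y)\<in>G \<longrightarrow> Y x + Y y \<ge> e" using cut 3 by blast
      qed auto
      then show ?thesis by simp
    qed
    finally show ?thesis .
  next
    case (4 x y z)
    have C: "{(i,j)\<in>G. i\<in>S \<and> j\<in>S \<and> Y i + Y j = e}
       = {g\<in>{(x,y),(x,z),(y,z)}. g \<in> G \<and> Y (fst g) + Y (snd g) = e}"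
      using 4 Glt by auto
    have Gs: "{(i,j)\<in>G. i\<in>S \<and> j\<in>S} = {g\<in>{(x,y),(x,z),(y,z)}. g \<in> G}"
      using 4 Glt by auto
    have "card S = 3" using 4 by simp
    then have "card {g\<in>{(x,y),(x,z),(y,z)}. g \<in> G} \<noteq> 2" using v2 Gs by simp
    moreover have "card {g\<in>{(x,y),(x,z),(y,z)}. g \<in> G} = of_bool ((x,y)\<in>G) + of_bool ((x,z)\<in>G) + of_bool ((y,z)\<in>G)"
      by (rule card_filter_3) (use 4 in auto)
    ultimately have v: "of_bool ((x,y)\<in>G) + of_bool ((x,z)\<in>G) + of_bool ((y,z)\<in>G) \<noteq> (2::nat)"
      by simp
    have "card {k\<in>S. Y k = 0} + card {(i,j)\<in>G. i\<in>S \<and> j\<in>S \<and> Y i + Y j = e}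
       = of_bool (Y x = 0) + of_bool (Y y = 0) + of_bool (Y z = 0)
       + of_bool ((x,y) \<in> G \<and> Y x + Y y = e) + of_bool ((x,z) \<in> G \<and> Y x + Y z = e)
       + of_bool ((y,z) \<in> G \<and> Y y + Y z = e)"
    proof -
      have "card {k\<in>S. Y k = 0} = of_bool (Y x = 0) + of_bool (Y y = 0) + of_bool (Y z = 0)"
        unfolding 4(3) by (rule card_filter_3) (use 4 in auto)
      moreover have "card {g\<in>{(x,y),(x,z),(y,z)}. g \<in> G \<and> Y (fst g) + Y (snd g) = e}
        = of_bool ((x,y) \<in> G \<and> Y x + Y y = e) + of_bool ((x,z) \<in> G \<and> Y x + Y z = e)
       + of_bool ((y,z) \<in> G \<and> Y y + Y z = e)"
        by (subst card_filter_3) (use 4 in auto)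
      ultimately show ?thesis unfolding C by simp
    qed
    also have "\<dots> \<le> 3"
    proof (rule core3[OF _ _ _ e _ _ _ v])
      show "Y x \<ge> 0" "Y y \<ge> 0" "Y z \<ge> 0" using nn 4 by auto
      show "(x,y)\<in>G \<longrightarrow> Y x + Y y \<ge> e" using cut 4 by blast
      show "(x,z)\<in>G \<longrightarrow> Y x + Y z \<ge> e" using cut 4 by blast
      show "(y,z)\<in>G \<longrightarrow> Y y + Y z \<ge> e" using cut 4 by blast
    qed
    finally show ?thesis .
  qed
qed

lemma comb2:
  fixes S :: "nat set" and G :: "(nat\<times>nat) set"
  assumes fin: "finite S" and cS: "card S = 3"
    and Glt: "\<forall>(i,j)\<in>G. i < j"
    and v2: "card {(i,j)\<in>G. i\<in>S \<and> j\<in>S} = 2"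
  shows "\<exists>c\<in>S. \<forall>(i,j)\<in>G. i\<in>S \<longrightarrow> j\<in>S \<longrightarrow> i = c \<or> j = c"
proof -
  obtain x y z where 4: "x < y" "y < z" "S = {x,y,z}"
    using sorted_elems[OF fin] cS by force
  have Gs: "{(i,j)\<in>G. i\<in>S \<and> j\<in>S} = {g\<in>{(x,y),(x,z),(y,z)}. g \<in> G}"
    using 4 Glt by auto
  moreover have "card {g\<in>{(x,y),(x,z),(y,z)}. g \<in> G} = of_bool ((x,y)\<in>G) + of_bool ((x,z)\<in>G) + of_bool ((y,z)\<in>G)"
    by (rule card_filter_3) (use 4 in auto)
  ultimately have v: "of_bool ((x,y)\<in>G) + of_bool ((x,z)\<in>G) + of_bool ((y,z)\<in>G) = (2::nat)"
    using v2 by simp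
  then have "(y,z) \<notin> G \<or> (x,z) \<notin> G \<or> (x,y) \<notin> G" by auto
  then show ?thesis
  proof (elim disjE)
    assume "(y,z) \<notin> G" then show ?thesis using 4 Glt by (intro bexI[of _ x]) auto
  next
    assume "(x,z) \<notin> G" then show ?thesis using 4 Glt by (intro bexI[of _ y]) auto
  next
    assume "(x,y) \<notin> G" then show ?thesis using 4 Glt by (intro bexI[of _ z]) auto
  qed
qed




locale setting =
  fixes m :: nat and a :: "nat \<Rightarrow> real^3" and b :: "nat \<Rightarrow> real"
    and P :: "(real^3) set" and \<Gamma> :: "(nat \<times> nat) set"
  assumes P_def: "P = ineq_poly m a b"
    and polyP: "polytope P" and dimP: "aff_dim P = 3"
    and irr: "irredundant m a b"
    and simpP: "simple_polytope P"
    and \<Gamma>_edges: "\<forall>(i,j)\<in>\<Gamma>. i < j \<and> j < m \<and>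
                     (facet_set a b P i \<inter> facet_set a b P j) edge_of P"
begin

abbreviation y :: "nat \<Rightarrow> real^3 \<Rightarrow> real" where "y k x \<equiv> a k \<bullet> x + b k"

abbreviation T :: "real^3 \<Rightarrow> nat set" where "T x \<equiv> tight {..<m} a b x"

lemma P_poly: "P = polyset {..<m} a b"
  by (auto simp: P_def ineq_poly_def polyset_def)

lemma memP: "x \<in> P \<longleftrightarrow> (\<forall>k<m. y k x \<ge> 0)"
  by (auto simp: P_poly polyset_def)

lemma T_def': "T x = {k. k < m \<and> y k x = 0}"
  by (auto simp: tight_def)

lemma P_ne: "P \<noteq> {}" using dimP by auto

lemma convexP: "convex P" by (simp add: P_poly convex_polyset)
lemma compactP: "compact P" using polyP polytope_imp_compact by blast

lemma Gam: "(i,j) \<in> \<Gamma> \<Longrightarrow> i < j \<and> j < m" using \<Gamma>_edges by blast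

lemma finGam: "finite \<Gamma>"
proof -
  have "\<Gamma> \<subseteq> {..<m} \<times> {..<m}" using Gam by fastforce
  then show ?thesis by (rule finite_subset) auto
qed

lemma xk: assumes "k < m" shows "\<exists>x. (\<forall>i<m. i \<noteq> k \<longrightarrow> y i x \<ge> 0) \<and> y k x < 0"
proof -
  have ne: "{x. \<forall>i<m. i \<noteq> k \<longrightarrow> y i x \<ge> 0} \<noteq> ineq_poly m a b"
    using irr assms by (auto simp: irredundant_def)
  have "ineq_poly m a b \<subseteq> {x. \<forall>i<m. i \<noteq> k \<longrightarrow> y i x \<ge> 0}" by (auto simp: ineq_poly_def)
  then obtain x where "x \<in> {x. \<forall>i<m. i \<noteq> k \<longrightarrow> y i x \<ge> 0}" "x \<notin> ineq_poly m a b"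
    using ne by blast
  then show ?thesis by (auto simp: ineq_poly_def) (metis not_le)
qed

lemma a_nz: assumes "k < m" shows "a k \<noteq> 0"
proof
  assume a0: "a k = 0"
  obtain x where "y k x < 0" using xk[OF assms] by blast
  then have "b k < 0" using a0 by simp
  moreover obtain z where "z \<in> P" using P_ne by blast
  then have "y k z \<ge> 0" using assms memP by blast
  ultimately show False using a0 by simp
qed

lemma interior_pt: "\<exists>p. \<forall>k<m. y k p > 0"
proof -
  have "affine hull P = UNIV" using dimP aff_dim_eq_full[of P] by simp
  then have ri: "rel_interior P = interior P" by (simp add: rel_interior_interior)
  obtain p where "p \<in> rel_interior P" using convexP P_ne rel_interior_eq_empty by blast
  then have pint: "p \<in> interior P" using ri by simp
  then obtain e where e: "e > 0" "ball p e \<subseteq> P" using mem_interior by blast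
  have "y k p > 0" if k: "k < m" for k
  proof (rule ccontr)
    assume "\<not> y k p > 0"
    moreover have "y k p \<ge> 0" using pint interior_subset memP k by blast
    ultimately have y0: "y k p = 0" by simp
    define t where "t = e / (2 * norm (a k))"
    have nz: "norm (a k) > 0" using a_nz[OF k] by simp
    have t: "t > 0" using e nz by (simp add: t_def)
    let ?z = "p - t *\<^sub>R a k"
    have "dist p ?z = t * norm (a k)" using t by (simp add: dist_norm)
    also have "\<dots> = e / 2" using nz by (simp add: t_def)
    finally have "?z \<in> ball p e" using e by simp
    then have "?z \<in> P" using e by blast
    then have "y k ?z \<ge> 0" using memP k by blast
    moreover have "y k ?z = - t * (a k \<bullet> a k)" using y0 by (simp add: inner_diff_right algebra_simps)
    moreover have "a k \<bullet> a k > 0" using a_nz[OF k] by simp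
    then have "t * (a k \<bullet> a k) > 0" using t by simp
    ultimately show False by linarith
  qed
  then show ?thesis by blast
qed

lemma witnessP: assumes k: "k < m" shows "\<exists>w. y k w = 0 \<and> (\<forall>l<m. l \<noteq> k \<longrightarrow> y l w > 0)"
proof -
  obtain p where p: "\<forall>k<m. y k p > 0" using interior_pt by blast
  obtain x where x: "\<forall>i<m. i \<noteq> k \<longrightarrow> y i x \<ge> 0" "y k x < 0" using xk[OF k] by blast
  define s where "s = y k p"
  define r where "r = y k x"
  have s: "s > 0" using p k s_def by simp
  have r: "r < 0" using x r_def by simp
  define t where "t = s / (s - r)"
  have t: "0 < t" "t < 1" using s r by (auto simp: t_def field_simps)
  define w where "w = (1 - t) *\<^sub>R p + t *\<^sub>R x"
  have yw: "y l w = (1 - t) * y l p + t * y l x" for l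
    by (simp add: w_def inner_add_right algebra_simps)
  have "y k w = 0"
    unfolding yw s_def[symmetric] r_def[symmetric] using s r by (simp add: t_def field_simps)
  moreover have "y l w > 0" if "l < m" "l \<noteq> k" for l
  proof -
    have "(1 - t) * y l p > 0" using t p that by simp
    moreover have "t * y l x \<ge> 0" using t x that by simp
    ultimately show ?thesis unfolding yw by linarith
  qed
  ultimately show ?thesis by blast
qed

lemma card_facets_P: assumes "x \<in> P"
  shows "card {F. F facet_of P \<and> x \<in> F} = card (T x)"
proof -
  obtain p where p: "\<forall>k<m. y k p > 0" using interior_pt by blast
  have W: "\<forall>k\<in>{..<m}. \<exists>w. y k w = 0 \<and> (\<forall>l\<in>{..<m}. l \<noteq> k \<longrightarrow> y l w > 0)"
  proof
    fix k assume "k \<in> {..<m}"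
    then obtain w where "y k w = 0" "\<forall>l<m. l \<noteq> k \<longrightarrow> y l w > 0" using witnessP by auto
    then show "\<exists>w. y k w = 0 \<and> (\<forall>l\<in>{..<m}. l \<noteq> k \<longrightarrow> y l w > 0)" by auto
  qed
  show ?thesis unfolding P_poly
    by (rule card_facets_polyset[where p=p]) (use a_nz p W assms P_poly in auto)
qed

lemma vertex3: assumes "v extreme_point_of P" shows "card (T v) = 3"
proof -
  have "v \<in> P" using assms extreme_point_of_def by blast
  have "int (card {F. F facet_of P \<and> v \<in> F}) = aff_dim P"
    using simpP assms by (auto simp: simple_polytope_def)
  then show ?thesis using card_facets_P[OF \<open>v \<in> P\<close>] dimP by simp
qed

lemma vspan: assumes "v extreme_point_of P" shows "span (a ` T v) = UNIV"
  using extreme_imp_span[of "{..<m}" v a b] assms P_poly by simp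

lemma sumeq: "(\<Sum>k\<in>S. a k) \<bullet> x + (\<Sum>k\<in>S. b k) = (\<Sum>k\<in>S. y k x)"
  by (simp add: inner_sum_left sum.distrib)

lemma zeroset_face: assumes "S \<subseteq> {..<m}"
  shows "(P \<inter> {x. \<forall>k\<in>S. y k x = 0}) face_of P"
proof -
  have fS: "finite S" using assms finite_subset by blast
  have nn: "\<forall>k\<in>S. y k x \<ge> 0" if "x \<in> P" for x
  proof
    fix k assume "k \<in> S"
    then have "k < m" using assms by auto
    then show "y k x \<ge> 0" using that memP by blast
  qed
  have eq: "P \<inter> {x. \<forall>k\<in>S. y k x = 0} = P \<inter> {x. (\<Sum>k\<in>S. a k) \<bullet> x = - (\<Sum>k\<in>S. b k)}"
  proof (intro set_eqI iffI)
    fix x assume x: "x \<in> P \<inter> {x. \<forall>k\<in>S. y k x = 0}"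
    then have "(\<Sum>k\<in>S. y k x) = 0" by simp
    then have "(\<Sum>k\<in>S. a k) \<bullet> x + (\<Sum>k\<in>S. b k) = 0" by (simp only: sumeq)
    then show "x \<in> P \<inter> {x. (\<Sum>k\<in>S. a k) \<bullet> x = - (\<Sum>k\<in>S. b k)}"
      using x by (simp add: eq_neg_iff_add_eq_0)
  next
    fix x assume x: "x \<in> P \<inter> {x. (\<Sum>k\<in>S. a k) \<bullet> x = - (\<Sum>k\<in>S. b k)}"
    then have "(\<Sum>k\<in>S. a k) \<bullet> x + (\<Sum>k\<in>S. b k) = 0" by simp
    then have s0: "(\<Sum>k\<in>S. y k x) = 0" by (simp only: sumeq)
    have "\<forall>k\<in>S. y k x \<ge> 0" using x nn by blast
    then have "\<forall>k\<in>S. y k x = 0" using sum_nonneg_eq_0_iff[OF fS, of "\<lambda>k. y k x"] s0 by simp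
    then show "x \<in> P \<inter> {x. \<forall>k\<in>S. y k x = 0}" using x by simp
  qed
  show ?thesis unfolding eq
  proof (rule face_of_Int_supporting_hyperplane_ge[OF convexP])
    fix x assume x: "x \<in> P"
    have "(\<Sum>k\<in>S. y k x) \<ge> 0" using nn[OF x] by (intro sum_nonneg) auto
    then have "(\<Sum>k\<in>S. a k) \<bullet> x + (\<Sum>k\<in>S. b k) \<ge> 0" by (simp only: sumeq)
    then show "(\<Sum>k\<in>S. a k) \<bullet> x \<ge> - (\<Sum>k\<in>S. b k)" by simp
  qed
qed

lemma K1: assumes S: "S \<subseteq> {..<m}" and x: "x \<in> P" "\<forall>k\<in>S. y k x = 0"
  shows "\<exists>v. v extreme_point_of P \<and> S \<subseteq> T v"
proof -
  let ?F = "P \<inter> {x. \<forall>k\<in>S. y k x = 0}"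
  have F: "?F face_of P" using zeroset_face[OF S] .
  have "compact ?F" using face_of_imp_compact[OF convexP compactP F] .
  moreover have "convex ?F" using F face_of_imp_convex by blast
  moreover have "?F \<noteq> {}" using x by blast
  ultimately obtain v where "v extreme_point_of ?F" using extreme_point_exists_convex by blast
  then have "v extreme_point_of P" "v \<in> ?F" using extreme_point_of_face[OF F] by auto
  then show ?thesis using S by (auto simp: tight_def)
qed

lemma edge_witness: assumes g: "(i,j) \<in> \<Gamma>"
  shows "\<exists>q\<in>P. y i q = 0 \<and> y j q = 0 \<and> (\<forall>l<m. l \<noteq> i \<longrightarrow> l \<noteq> j \<longrightarrow> y l q > 0)"
proof -
  define E where "E = facet_set a b P i \<inter> facet_set a b P j"
  have ij: "i < j" "j < m" using Gam[OF g] by auto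
  have Ee: "E edge_of P" using \<Gamma>_edges g by (auto simp: E_def)
  then have Ef: "E face_of P" and Ed: "aff_dim E = 1" by (auto simp: edge_of_def)
  have Eeq: "E = P \<inter> {x. y i x = 0} \<inter> {x. y j x = 0}" by (auto simp: E_def facet_set_def)
  have "E \<noteq> {}" using Ed by auto
  moreover have "convex E" using Ef face_of_imp_convex by blast
  ultimately obtain q where q: "q \<in> rel_interior E" using rel_interior_eq_empty by blast
  then have qE: "q \<in> E" using rel_interior_subset by blast
  have "y l q > 0" if l: "l < m" "l \<noteq> i" "l \<noteq> j" for l
  proof (rule ccontr)
    assume "\<not> y l q > 0"
    moreover have "y l q \<ge> 0" using qE Eeq memP l by blast
    ultimately have yl: "y l q = 0" by simp
    have Fl: "fset {..<m} a b l face_of P" using fset_face[of l "{..<m}" a b] l P_poly by simp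
    have "q \<in> fset {..<m} a b l" using qE Eeq yl by (auto simp: fset_def P_poly)
    then have "E \<subseteq> fset {..<m} a b l"
      using subset_of_face_of[OF Fl _, of E] q Ef face_of_imp_subset by blast
    have "compact E" using face_of_imp_compact[OF convexP compactP Ef] .
    then obtain v where "v extreme_point_of E"
      using extreme_point_exists_convex \<open>convex E\<close> \<open>E \<noteq> {}\<close> by blast
    then have v: "v extreme_point_of P" "v \<in> E" using extreme_point_of_face[OF Ef] by auto
    have vl: "y l v = 0" using \<open>E \<subseteq> fset {..<m} a b l\<close> v(2) by (auto simp: fset_def)
    have sub: "{i,j,l} \<subseteq> T v" using v(2) Eeq vl ij l by (auto simp: tight_def)
    have "card {i,j,l} = 3" using ij l by auto
    then have Tv: "T v = {i,j,l}" using card_subset_eq[OF _ sub] vertex3[OF v(1)] by (simp add: tight_def)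
    have "x = v" if xE: "x \<in> E" for x
    proof -
      have "y l x = 0" "y l v = 0" using xE v(2) \<open>E \<subseteq> fset {..<m} a b l\<close> by (auto simp: fset_def)
      moreover have "y i x = 0" "y j x = 0" "y i v = 0" "y j v = 0" using xE v(2) Eeq by auto
      ultimately have "\<forall>k\<in>T v. a k \<bullet> (x - v) = 0"
        unfolding Tv by (auto simp: inner_diff_right)
      from orth_span[OF vspan[OF v(1)] this] show ?thesis by simp
    qed
    then have "E = {v}" using v(2) by blast
    then show False using Ed by simp
  qed
  then show ?thesis using qE Eeq by blast
qed

end



context setting begin

definition Kq :: "(nat + nat \<times> nat) set" where "Kq = Inl ` {..<m} \<union> Inr ` \<Gamma>"
definition cq :: "nat + nat \<times> nat \<Rightarrow> real^3" where "cq = case_sum a (\<lambda>(i,j). a i + a j)"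
definition dq :: "real \<Rightarrow> nat + nat \<times> nat \<Rightarrow> real" where "dq e = case_sum b (\<lambda>(i,j). b i + b j - e)"

lemma cd_Inl[simp]: "cq (Inl k) \<bullet> x + dq e (Inl k) = y k x" by (simp add: cq_def dq_def)
lemma cd_Inr[simp]: "cq (Inr (i,j)) \<bullet> x + dq e (Inr (i,j)) = y i x + y j x - e"
  by (simp add: cq_def dq_def inner_add_left)

lemma finKq: "finite Kq" using finGam by (simp add: Kq_def)

lemma memQ: "x \<in> polyset Kq cq (dq e) \<longleftrightarrow> x \<in> P \<and> (\<forall>(i,j)\<in>\<Gamma>. y i x + y j x \<ge> e)"
proof
  assume H: "x \<in> polyset Kq cq (dq e)"
  have "y k x \<ge> 0" if "k < m" for k
  proof -
    have "Inl k \<in> Kq" using that by (simp add: Kq_def)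
    then show ?thesis using H cd_Inl[of k x e] unfolding polyset_def by fastforce
  qed
  moreover have "y i x + y j x \<ge> e" if "(i,j) \<in> \<Gamma>" for i j
  proof -
    have "Inr (i,j) \<in> Kq" using that by (simp add: Kq_def)
    then show ?thesis using H cd_Inr[of i j x e] unfolding polyset_def by fastforce
  qed
  ultimately show "x \<in> P \<and> (\<forall>(i,j)\<in>\<Gamma>. y i x + y j x \<ge> e)" by (auto simp: memP)
next
  assume H: "x \<in> P \<and> (\<forall>(i,j)\<in>\<Gamma>. y i x + y j x \<ge> e)"
  show "x \<in> polyset Kq cq (dq e)" unfolding polyset_def
  proof (intro CollectI ballI)
    fix k assume "k \<in> Kq"
    then consider k' where "k = Inl k'" "k' < m" | i j where "k = Inr (i,j)" "(i,j) \<in> \<Gamma>"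
      by (auto simp: Kq_def)
    then show "cq k \<bullet> x + dq e k \<ge> 0"
    proof cases
      case 1 then show ?thesis using H by (simp add: memP)
    next
      case 2 then show ?thesis using H by auto
    qed
  qed
qed

lemma Q_eq: "graph_trunc a b P \<Gamma> e = polyset Kq cq (dq e)"
  unfolding graph_trunc_def by (rule set_eqI) (auto simp: memQ inner_add_left algebra_simps)

lemma QsubP: "polyset Kq cq (dq e) \<subseteq> P" using memQ by blast

lemma tightQ: "tight Kq cq (dq e) x = Inl ` {k. k < m \<and> y k x = 0} \<union> Inr ` {(i,j)\<in>\<Gamma>. y i x + y j x = e}"
  by (auto simp: tight_def Kq_def)

lemma card_tightQ: "card (tight Kq cq (dq e) x) = card {k. k < m \<and> y k x = 0} + card {(i,j)\<in>\<Gamma>. y i x + y j x = e}"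
proof -
  have f1: "finite (Inl ` {k. k < m \<and> y k x = 0} :: (nat + nat \<times> nat) set)" by simp
  have "finite {(i,j)\<in>\<Gamma>. y i x + y j x = e}" by (rule finite_subset[OF _ finGam]) auto
  then have f2: "finite (Inr ` {(i,j)\<in>\<Gamma>. y i x + y j x = e} :: (nat + nat \<times> nat) set)"
    by simp
  show ?thesis unfolding tightQ
    by (subst card_Un_disjoint[OF f1 f2]) (auto simp: card_image)
qed

definition pp where "pp = (SOME p. \<forall>k<m. y k p > 0)"
lemma pp: "\<forall>k<m. y k pp > 0" unfolding pp_def using interior_pt by (rule someI_ex)

definition ww where "ww k = (SOME w. y k w = 0 \<and> (\<forall>l<m. l \<noteq> k \<longrightarrow> y l w > 0))"
lemma ww: "k < m \<Longrightarrow> y k (ww k) = 0 \<and> (\<forall>l<m. l \<noteq> k \<longrightarrow> y l (ww k) > 0)"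
  unfolding ww_def by (rule someI_ex) (rule witnessP)

definition qq where "qq g = (SOME q. q \<in> P \<and> y (fst g) q = 0 \<and> y (snd g) q = 0 \<and>
     (\<forall>l<m. l \<noteq> fst g \<longrightarrow> l \<noteq> snd g \<longrightarrow> y l q > 0))"
lemma qq: assumes "(i,j) \<in> \<Gamma>"
  shows "qq (i,j) \<in> P \<and> y i (qq (i,j)) = 0 \<and> y j (qq (i,j)) = 0 \<and>
     (\<forall>l<m. l \<noteq> i \<longrightarrow> l \<noteq> j \<longrightarrow> y l (qq (i,j)) > 0)"
  unfolding qq_def fst_conv snd_conv using edge_witness[OF assms] by (rule someI_ex[OF bexE]) auto

lemma cq_nz: "k \<in> Kq \<Longrightarrow> cq k \<noteq> 0"
proof (cases k)
  case (Inl k') assume "k \<in> Kq" then show ?thesis using Inl a_nz by (auto simp: Kq_def cq_def)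
next
  case (Inr g)
  assume kK: "k \<in> Kq"
  then obtain i j where g: "g = (i,j)" "(i,j) \<in> \<Gamma>" using Inr by (auto simp: Kq_def)
  show ?thesis
  proof
    assume "cq k = 0"
    then have z: "a i + a j = 0" using Inr g by (simp add: cq_def)
    have "y i x + y j x = b i + b j" for x using z by (simp add: algebra_simps inner_add_left[symmetric])
    then have "y i (qq (i,j)) + y j (qq (i,j)) = y i pp + y j pp" by simp
    moreover have "y i pp > 0" "y j pp > 0" using pp Gam[OF g(2)] by auto
    ultimately show False using qq[OF g(2)] by simp
  qed
qed

lemma delta: assumes S: "S \<subseteq> {..<m}" and nz: "\<not> (\<exists>x\<in>P. \<forall>k\<in>S. y k x = 0)"
  shows "\<exists>\<delta>>0. \<forall>x\<in>P. \<exists>k\<in>S. y k x \<ge> \<delta>"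
proof -
  have fS: "finite S" using S finite_subset by blast
  have Sne: "S \<noteq> {}" using nz P_ne by auto
  have "continuous_on P (\<lambda>x. \<Sum>k\<in>S. y k x)" by (intro continuous_intros)
  then obtain x0 where x0: "x0 \<in> P" "\<forall>x\<in>P. (\<Sum>k\<in>S. y k x0) \<le> (\<Sum>k\<in>S. y k x)"
    using continuous_attains_inf[OF compactP P_ne] by blast
  have nn: "\<forall>k\<in>S. y k x \<ge> 0" if "x \<in> P" for x
  proof
    fix k assume "k \<in> S"
    then have "k < m" using S by auto
    then show "y k x \<ge> 0" using that memP by blast
  qed
  have "(\<Sum>k\<in>S. y k x0) \<noteq> 0"
  proof
    assume "(\<Sum>k\<in>S. y k x0) = 0"
    then have "\<forall>k\<in>S. y k x0 = 0" using sum_nonneg_eq_0_iff[OF fS, of "\<lambda>k. y k x0"] nn[OF x0(1)] by simp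
    then show False using nz x0(1) by blast
  qed
  moreover have "(\<Sum>k\<in>S. y k x0) \<ge> 0" using nn[OF x0(1)] by (intro sum_nonneg) auto
  ultimately have pos: "(\<Sum>k\<in>S. y k x0) > 0" by simp
  define \<delta> where "\<delta> = (\<Sum>k\<in>S. y k x0) / card S"
  have cS: "card S > 0" using fS Sne by (simp add: card_gt_0_iff)
  have dpos: "\<delta> > 0" using pos cS by (simp add: \<delta>_def)
  have "\<exists>k\<in>S. y k x \<ge> \<delta>" if x: "x \<in> P" for x
  proof (rule ccontr)
    assume "\<not> (\<exists>k\<in>S. y k x \<ge> \<delta>)"
    then have "\<And>k. k \<in> S \<Longrightarrow> y k x < \<delta>" by (auto simp: not_le)
    then have "(\<Sum>k\<in>S. y k x) < of_nat (card S) * \<delta>" using cS by (rule sum_bounded_above_strict)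
    also have "\<dots> = (\<Sum>k\<in>S. y k x0)" using cS by (simp add: \<delta>_def)
    finally show False using x0(2) x by force
  qed
  then show ?thesis using dpos by blast
qed

definition good :: "real \<Rightarrow> bool" where
  "good e \<longleftrightarrow> (\<forall>g\<in>\<Gamma>. e < y (fst g) pp + y (snd g) pp) \<and>
     (\<forall>k\<in>{..<m}. \<forall>g\<in>\<Gamma>. e < y (fst g) (ww k) + y (snd g) (ww k)) \<and>
     (\<forall>g\<in>\<Gamma>. \<forall>l\<in>{..<m}. l \<noteq> fst g \<longrightarrow> l \<noteq> snd g \<longrightarrow>
        e * (1 + y l (qq g) / (y (fst g) pp + y (snd g) pp)) < y l (qq g)) \<and>
     (\<forall>S\<in>Pow {..<m}. \<not> (\<exists>x\<in>P. \<forall>k\<in>S. y k x = 0) \<longrightarrow> (\<forall>x\<in>P. \<exists>k\<in>S. y k x > e))"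

lemma ev_good: "eventually good (at_right 0)"
proof -
  have e1: "eventually (\<lambda>e. \<forall>g\<in>\<Gamma>. e < y (fst g) pp + y (snd g) pp) (at_right 0)"
  proof (rule eventually_ball_finite[OF finGam], rule ballI)
    fix g assume g: "g \<in> \<Gamma>"
    obtain i j where gij: "g = (i,j)" by (cases g)
    have "i < j" "j < m" using Gam g gij by auto
    then have ij: "i < m" "j < m" by auto
    have "y i pp > 0" "y j pp > 0" using pp ij by auto
    then have "y (fst g) pp + y (snd g) pp > 0" using gij by simp
    from eventually_small[OF this, of 1] show "eventually (\<lambda>e. e < y (fst g) pp + y (snd g) pp) (at_right 0)" by simp
  qed
  have e2: "eventually (\<lambda>e. \<forall>k\<in>{..<m}. \<forall>g\<in>\<Gamma>. e < y (fst g) (ww k) + y (snd g) (ww k)) (at_right 0)"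
  proof (rule eventually_ball_finite, simp, rule ballI, rule eventually_ball_finite[OF finGam], rule ballI)
    fix k g assume k: "k \<in> {..<m}" and g: "g \<in> \<Gamma>"
    obtain i j where gij: "g = (i,j)" by (cases g)
    have ij: "i < j" "j < m" using Gam g gij by auto
    have nn: "y l (ww k) \<ge> 0" if "l < m" for l using ww[of k] k that by (cases "l = k") auto
    have "y i (ww k) \<ge> 0" "y j (ww k) \<ge> 0" using nn ij by auto
    moreover have "y i (ww k) > 0 \<or> y j (ww k) > 0"
    proof (cases "i = k")
      case True then have "j \<noteq> k" using ij by auto
      then show ?thesis using ww[of k] k ij by auto
    next
      case False then show ?thesis using ww[of k] k ij by auto
    qed
    ultimately have "y (fst g) (ww k) + y (snd g) (ww k) > 0" using gij by auto
    from eventually_small[OF this, of 1] show "eventually (\<lambda>e. e < y (fst g) (ww k) + y (snd g) (ww k)) (at_right 0)" by simp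
  qed
  have e3: "eventually (\<lambda>e. \<forall>g\<in>\<Gamma>. \<forall>l\<in>{..<m}. l \<noteq> fst g \<longrightarrow> l \<noteq> snd g \<longrightarrow>
        e * (1 + y l (qq g) / (y (fst g) pp + y (snd g) pp)) < y l (qq g)) (at_right 0)"
  proof (rule eventually_ball_finite[OF finGam], rule ballI, rule eventually_ball_finite, simp, rule ballI)
    fix g l assume g: "g \<in> \<Gamma>" and l: "l \<in> {..<m}"
    obtain i j where gij: "g = (i,j)" by (cases g)
    show "eventually (\<lambda>e. l \<noteq> fst g \<longrightarrow> l \<noteq> snd g \<longrightarrow>
        e * (1 + y l (qq g) / (y (fst g) pp + y (snd g) pp)) < y l (qq g)) (at_right 0)"
    proof (cases "l \<noteq> i \<and> l \<noteq> j")
      case True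
      then have "y l (qq g) > 0" using qq[of i j] g gij l by auto
      from eventually_small[OF this] show ?thesis by (rule eventually_mono) auto
    next
      case False then show ?thesis using gij by auto
    qed
  qed
  have e4: "eventually (\<lambda>e. \<forall>S\<in>Pow {..<m}. \<not> (\<exists>x\<in>P. \<forall>k\<in>S. y k x = 0) \<longrightarrow> (\<forall>x\<in>P. \<exists>k\<in>S. y k x > e)) (at_right 0)"
  proof (rule eventually_ball_finite, simp, rule ballI)
    fix S assume S: "S \<in> Pow {..<m}"
    show "eventually (\<lambda>e. \<not> (\<exists>x\<in>P. \<forall>k\<in>S. y k x = 0) \<longrightarrow> (\<forall>x\<in>P. \<exists>k\<in>S. y k x > e)) (at_right 0)"
    proof (cases "\<exists>x\<in>P. \<forall>k\<in>S. y k x = 0")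
      case True then show ?thesis by simp
    next
      case False
      then obtain \<delta> where d: "\<delta> > 0" "\<forall>x\<in>P. \<exists>k\<in>S. y k x \<ge> \<delta>" using delta S by blast
      from eventually_small[OF d(1), of 1] show ?thesis
        by (rule eventually_mono) (use d(2) in force)
    qed
  qed
  show ?thesis
    using eventually_conj[OF e1 eventually_conj[OF e2 eventually_conj[OF e3 e4]]]
    by (rule eventually_mono) (simp only: good_def)
qed

end



context setting begin

lemma Gam2: assumes "(i,j) \<in> \<Gamma>" shows "i < m" "j < m" "i < j"
  using Gam[OF assms] by auto

lemma valency_eq: assumes "v \<in> P"
  shows "valency a b P \<Gamma> v = card {(i,j)\<in>\<Gamma>. i \<in> T v \<and> j \<in> T v}"
proof -
  have "{(i,j)\<in>\<Gamma>. v \<in> facet_set a b P i \<inter> facet_set a b P j} = {(i,j)\<in>\<Gamma>. i \<in> T v \<and> j \<in> T v}"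
    using assms Gam2 by (auto simp: facet_set_def tight_def)
  then show ?thesis by (simp add: valency_def)
qed

lemma pp_Q: assumes "good e" shows "\<forall>k\<in>Kq. cq k \<bullet> pp + dq e k > 0"
proof
  fix k assume "k \<in> Kq"
  then consider k' where "k = Inl k'" "k' < m" | i j where "k = Inr (i,j)" "(i,j) \<in> \<Gamma>"
    by (auto simp: Kq_def)
  then show "cq k \<bullet> pp + dq e k > 0"
  proof cases
    case 1 then show ?thesis using pp by simp
  next
    case 2 then show ?thesis using assms by (force simp: good_def)
  qed
qed

lemma wit_Q: assumes e: "e > 0" "good e" and k: "k \<in> Kq"
  shows "\<exists>w. cq k \<bullet> w + dq e k = 0 \<and> (\<forall>l\<in>Kq. l \<noteq> k \<longrightarrow> cq l \<bullet> w + dq e l > 0)"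
proof -
  consider k' where "k = Inl k'" "k' < m" | i j where "k = Inr (i,j)" "(i,j) \<in> \<Gamma>"
    using k by (auto simp: Kq_def)
  then show ?thesis
  proof cases
    case 1
    have "\<forall>l\<in>Kq. l \<noteq> k \<longrightarrow> cq l \<bullet> ww k' + dq e l > 0"
    proof (intro ballI impI)
      fix l assume l: "l \<in> Kq" "l \<noteq> k"
      then consider l' where "l = Inl l'" "l' < m" | i j where "l = Inr (i,j)" "(i,j) \<in> \<Gamma>"
        by (auto simp: Kq_def)
      then show "cq l \<bullet> ww k' + dq e l > 0"
      proof cases
        case 1 then show ?thesis using ww[of k'] \<open>k' < m\<close> l \<open>k = Inl k'\<close> by auto
      next
        case (2 i j)
        then have "e < y i (ww k') + y j (ww k')" using e(2) \<open>k' < m\<close> unfolding good_def by force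
        then show ?thesis using 2 by simp
      qed
    qed
    then show ?thesis using ww[of k'] 1 by auto
  next
    case (2 i j)
    have ij: "i < j" "j < m" using Gam 2 by auto
    define s where "s = y i pp + y j pp"
    have spos: "s > 0" using pp ij by (auto simp: s_def intro: add_pos_pos)
    have es: "e < s" using e(2) 2 by (force simp: good_def s_def)
    define t where "t = e / s"
    have t: "0 < t" "t < 1" using e(1) es spos by (auto simp: t_def)
    define q where "q = qq (i,j)"
    have q: "q \<in> P" "y i q = 0" "y j q = 0" "\<forall>l<m. l \<noteq> i \<longrightarrow> l \<noteq> j \<longrightarrow> y l q > 0"
      using qq[OF 2(2)] by (auto simp: q_def)
    define z where "z = (1 - t) *\<^sub>R q + t *\<^sub>R pp"
    have yz: "y l z = (1 - t) * y l q + t * y l pp" for l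
      by (simp add: z_def inner_add_right algebra_simps)
    have zi: "y i z = t * y i pp" "y j z = t * y j pp" using yz q by auto
    have zpos: "y l z > 0" if "l < m" for l
    proof (cases "l = i \<or> l = j")
      case True then show ?thesis using zi t pp that by auto
    next
      case False
      then have "(1 - t) * y l q > 0" using q t that by auto
      moreover have "t * y l pp > 0" using t pp that by auto
      ultimately show ?thesis using yz by (simp add: add_pos_pos)
    qed
    have "y i z + y j z = t * s" unfolding s_def by (simp only: zi distrib_left)
    also have "t * s = e" using spos by (simp add: t_def)
    finally have sum_ij: "y i z + y j z = e" .
    have big: "y l z > e" if "l < m" "l \<noteq> i" "l \<noteq> j" for l
    proof -
      have "e * (1 + y l q / s) < y l q"
        using e(2) 2 that unfolding good_def q_def s_def by force
      then have "e < (1 - t) * y l q" using spos by (simp add: t_def field_simps)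
      moreover have "t * y l pp > 0" using t pp that by auto
      ultimately show ?thesis using yz by simp
    qed
    have "\<forall>l\<in>Kq. l \<noteq> k \<longrightarrow> cq l \<bullet> z + dq e l > 0"
    proof (intro ballI impI)
      fix l assume l: "l \<in> Kq" "l \<noteq> k"
      then consider l' where "l = Inl l'" "l' < m" | i' j' where "l = Inr (i',j')" "(i',j') \<in> \<Gamma>"
        by (auto simp: Kq_def)
      then show "cq l \<bullet> z + dq e l > 0"
      proof cases
        case 1 then show ?thesis using zpos by simp
      next
        case (2 i' j')
        have ij': "i' < j'" "j' < m" using Gam 2 by auto
        have "(i',j') \<noteq> (i,j)" using l 2 \<open>k = Inr (i,j)\<close> by auto
        then have "(i' \<noteq> i \<and> i' \<noteq> j) \<or> (j' \<noteq> i \<and> j' \<noteq> j)" using ij ij' by auto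
        then have "y i' z + y j' z > e"
        proof
          assume "i' \<noteq> i \<and> i' \<noteq> j"
          then have "y i' z > e" using big ij' by auto
          moreover have "y j' z > 0" using zpos ij' by auto
          ultimately show ?thesis by simp
        next
          assume "j' \<noteq> i \<and> j' \<noteq> j"
          then have "y j' z > e" using big ij' by auto
          moreover have "y i' z > 0" using zpos ij' by auto
          ultimately show ?thesis by simp
        qed
        then show ?thesis using 2 by simp
      qed
    qed
    moreover have "cq k \<bullet> z + dq e k = 0" using sum_ij 2 by simp
    ultimately show ?thesis by blast
  qed
qed

lemma Q_dim: assumes "good e" shows "aff_dim (polyset Kq cq (dq e)) = 3"
  using aff_dim_polyset[OF finKq pp_Q[OF assms]] .

lemma Q_card: assumes "e > 0" "good e" "x \<in> polyset Kq cq (dq e)"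
  shows "card {F. F facet_of polyset Kq cq (dq e) \<and> x \<in> F} = card (tight Kq cq (dq e) x)"
  by (rule card_facets_polyset[OF finKq _ pp_Q[OF assms(2)]])
     (use cq_nz wit_Q[OF assms(1,2)] assms(3) in auto)

lemma Q_polytope: "polytope (polyset Kq cq (dq e))"
proof -
  have "bounded P" using polyP polytope_imp_bounded by blast
  then have "bounded (polyset Kq cq (dq e))" using QsubP bounded_subset by blast
  then show ?thesis using polyhedron_polyset[OF finKq] polytope_eq_bounded_polyhedron by blast
qed

lemma tight_ge3: assumes "u extreme_point_of polyset Kq cq (dq e)"
  shows "card (tight Kq cq (dq e) u) \<ge> 3"
proof -
  have sp: "span (cq ` tight Kq cq (dq e) u) = UNIV" using extreme_imp_span[OF finKq assms] .
  have ft: "finite (tight Kq cq (dq e) u)" using finKq by (simp add: tight_def)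
  have "dim (UNIV :: (real^3) set) \<le> card (cq ` tight Kq cq (dq e) u)"
    by (rule dim_le_card) (use sp ft in auto)
  also have "\<dots> \<le> card (tight Kq cq (dq e) u)" using ft by (rule card_image_le)
  finally show ?thesis by simp
qed

lemma tight_le3:
  assumes nv2: "\<forall>v. v extreme_point_of P \<longrightarrow> valency a b P \<Gamma> v \<noteq> 2"
    and e: "e > 0" "good e" and u: "u \<in> polyset Kq cq (dq e)"
  shows "card (tight Kq cq (dq e) u) \<le> 3"
proof -
  have uP: "u \<in> P" using u QsubP by blast
  have nn: "y k u \<ge> 0" if "k < m" for k using uP memP that by blast
  define S where "S = {k\<in>{..<m}. y k u \<le> e}"
  have Ssub: "S \<subseteq> {..<m}" by (auto simp: S_def)
  have "\<exists>x\<in>P. \<forall>k\<in>S. y k x = 0"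
  proof (rule ccontr)
    assume "\<not> (\<exists>x\<in>P. \<forall>k\<in>S. y k x = 0)"
    then have "\<exists>k\<in>S. y k u > e" using e(2) Ssub uP unfolding good_def by blast
    then show False by (auto simp: S_def)
  qed
  then obtain x where x: "x \<in> P" "\<forall>k\<in>S. y k x = 0" by blast
  obtain v where v: "v extreme_point_of P" "S \<subseteq> T v" using K1[OF Ssub x] by blast
  have fT: "finite (T v)" by (simp add: tight_def)
  have T3: "card (T v) = 3" using vertex3[OF v(1)] .
  have cS: "card S \<le> 3" using card_mono[OF fT v(2)] T3 by simp
  have fS: "finite S" using Ssub finite_subset by blast
  have v2: "card S = 3 \<longrightarrow> card {(i,j)\<in>\<Gamma>. i\<in>S \<and> j\<in>S} \<noteq> 2"
  proof
    assume "card S = 3"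
    then have "S = T v" using card_subset_eq[OF fT v(2)] T3 by simp
    moreover have "v \<in> P" using v(1) extreme_point_of_def by blast
    ultimately show "card {(i,j)\<in>\<Gamma>. i\<in>S \<and> j\<in>S} \<noteq> 2"
      using valency_eq nv2 v(1) by auto
  qed
  have Glt: "\<forall>(i,j)\<in>\<Gamma>. i < j" using Gam by auto
  have cut: "\<forall>(i,j)\<in>\<Gamma>. i\<in>S \<longrightarrow> j\<in>S \<longrightarrow> y i u + y j u \<ge> e" using u memQ by blast
  have nnS: "\<forall>i\<in>S. y i u \<ge> 0" using nn S_def by auto
  have comb_res: "card {k\<in>S. y k u = 0} + card {(i,j)\<in>\<Gamma>. i\<in>S \<and> j\<in>S \<and> y i u + y j u = e} \<le> 3"
    using comb[OF fS cS Glt v2 nnS e(1) cut] .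
  have Z: "{k. k < m \<and> y k u = 0} = {k\<in>S. y k u = 0}" using e(1) by (auto simp: S_def)
  have C: "{(i,j)\<in>\<Gamma>. y i u + y j u = e} = {(i,j)\<in>\<Gamma>. i\<in>S \<and> j\<in>S \<and> y i u + y j u = e}"
  proof (intro set_eqI iffI)
    fix g assume "g \<in> {(i,j)\<in>\<Gamma>. y i u + y j u = e}"
    then obtain i j where g: "g = (i,j)" "(i,j) \<in> \<Gamma>" "y i u + y j u = e" by auto
    have "i < m" "j < m" using Gam2 g(2) by auto
    then have "y i u \<ge> 0" "y j u \<ge> 0" using nn by auto
    then have "y i u \<le> e" "y j u \<le> e" using g(3) by linarith+
    then show "g \<in> {(i,j)\<in>\<Gamma>. i\<in>S \<and> j\<in>S \<and> y i u + y j u = e}"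
      using g \<open>i < m\<close> \<open>j < m\<close> by (auto simp: S_def)
  qed auto
  show ?thesis unfolding card_tightQ Z C using comb_res .
qed

lemma simple_dir:
  assumes nv2: "\<forall>v. v extreme_point_of P \<longrightarrow> valency a b P \<Gamma> v \<noteq> 2"
    and e: "e > 0" "good e"
  shows "simple_polytope (graph_trunc a b P \<Gamma> e)"
  unfolding simple_polytope_def Q_eq
proof (intro conjI allI impI Q_polytope)
  fix u assume u: "u extreme_point_of polyset Kq cq (dq e)"
  have uQ: "u \<in> polyset Kq cq (dq e)" using u extreme_point_of_def by blast
  have "card (tight Kq cq (dq e) u) = 3"
    using tight_ge3[OF u] tight_le3[OF nv2 e uQ] by simp
  then show "int (card {F. F facet_of polyset Kq cq (dq e) \<and> u \<in> F}) = aff_dim (polyset Kq cq (dq e))"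
    using Q_card[OF e uQ] Q_dim[OF e(2)] by simp
qed

end



context setting begin

lemma notsimple_dir:
  assumes v: "v extreme_point_of P" "valency a b P \<Gamma> v = 2"
  shows "eventually (\<lambda>e. \<not> simple_polytope (graph_trunc a b P \<Gamma> e)) (at_right 0)"
proof -
  have vP: "v \<in> P" using v(1) extreme_point_of_def by blast
  have fT: "finite (T v)" by (simp add: tight_def)
  have T3: "card (T v) = 3" using vertex3[OF v(1)] .
  define G where "G = {(i,j)\<in>\<Gamma>. i \<in> T v \<and> j \<in> T v}"
  have G2: "card G = 2" using valency_eq[OF vP] v(2) by (simp add: G_def)
  have Glt: "\<forall>(i,j)\<in>\<Gamma>. i < j" using Gam2 by auto
  obtain c where c: "c \<in> T v" "\<forall>(i,j)\<in>\<Gamma>. i \<in> T v \<longrightarrow> j \<in> T v \<longrightarrow> i = c \<or> j = c"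
    using comb2[OF fT T3 Glt] G2 by (auto simp: G_def)
  define R where "R = T v - {c}"
  have fR: "finite R" using fT by (simp add: R_def)
  have R2: "card R = 2" using T3 c(1) fT by (simp add: R_def)
  have "span (a ` R) \<noteq> UNIV"
  proof
    assume "span (a ` R) = UNIV"
    then have "dim (UNIV :: (real^3) set) \<le> card (a ` R)" using fR by (intro dim_le_card) auto
    also have "\<dots> \<le> card R" using fR by (rule card_image_le)
    finally show False using R2 by simp
  qed
  then obtain w where w: "w \<noteq> 0" "\<forall>x\<in>span (a ` R). w \<bullet> x = 0"
    using span_not_UNIV_orthogonal by blast
  have wR: "a k \<bullet> w = 0" if "k \<in> R" for k
    using w(2) span_base[of "a k" "a ` R"] that by (auto simp: inner_commute)
  have acw: "a c \<bullet> w \<noteq> 0"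
  proof
    assume "a c \<bullet> w = 0"
    then have "\<forall>k\<in>T v. a k \<bullet> w = 0" using wR by (auto simp: R_def)
    then show False using orth_span[OF vspan[OF v(1)]] w(1) by blast
  qed
  define d0 where "d0 = (1 / (a c \<bullet> w)) *\<^sub>R w"
  have d0c: "a c \<bullet> d0 = 1" using acw by (simp add: d0_def)
  have d0R: "a k \<bullet> d0 = 0" if "k \<in> R" for k using wR[OF that] by (simp add: d0_def)
  have cm: "c < m" using c(1) by (simp add: tight_def)
  have yv0: "y k v = 0" if "k \<in> T v" for k using that by (simp add: tight_def)
  have ypos: "y l v > 0" if "l < m" "l \<notin> T v" for l
    using that vP memP by (force simp: tight_def le_less)
  have ev1: "eventually (\<lambda>e. \<forall>l\<in>{..<m}. l \<notin> T v \<longrightarrow> e * (\<bar>a l \<bullet> d0\<bar> + 1) < y l v) (at_right 0)"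
  proof (rule eventually_ball_finite, simp, rule ballI)
    fix l assume l: "l \<in> {..<m}"
    show "eventually (\<lambda>e. l \<notin> T v \<longrightarrow> e * (\<bar>a l \<bullet> d0\<bar> + 1) < y l v) (at_right 0)"
    proof (cases "l \<in> T v")
      case True then show ?thesis by simp
    next
      case False
      then have "y l v > 0" using ypos l by auto
      from eventually_small[OF this] show ?thesis by (rule eventually_mono) auto
    qed
  qed
  have "eventually (\<lambda>e. e > 0 \<and> good e \<and> (\<forall>l\<in>{..<m}. l \<notin> T v \<longrightarrow> e * (\<bar>a l \<bullet> d0\<bar> + 1) < y l v)) (at_right 0)"
    using eventually_conj[OF eventually_at_right_less eventually_conj[OF ev_good ev1]] by simp
  then show ?thesis
  proof (rule eventually_mono)
    fix e assume H: "e > 0 \<and> good e \<and> (\<forall>l\<in>{..<m}. l \<notin> T v \<longrightarrow> e * (\<bar>a l \<bullet> d0\<bar> + 1) < y l v)"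
    then have e: "e > 0" "good e" by auto
    define u where "u = v + e *\<^sub>R d0"
    have yu: "y k u = y k v + e * (a k \<bullet> d0)" for k by (simp add: u_def inner_add_right algebra_simps)
    have yuR: "y k u = 0" if "k \<in> R" for k using yu d0R[OF that] yv0 that by (simp add: R_def)
    have yuc: "y c u = e" using yu d0c yv0[OF c(1)] by simp
    have yubig: "y l u > e" if "l < m" "l \<notin> T v" for l
    proof -
      have "e * (\<bar>a l \<bullet> d0\<bar> + 1) < y l v" using H that by auto
      moreover have "- \<bar>a l \<bullet> d0\<bar> \<le> a l \<bullet> d0" by (simp add: abs_if)
      then have "e * (- \<bar>a l \<bullet> d0\<bar>) \<le> e * (a l \<bullet> d0)" using e(1) by (intro mult_left_mono) auto
      moreover have "e * (\<bar>a l \<bullet> d0\<bar> + 1) = e * \<bar>a l \<bullet> d0\<bar> + e" by (simp add: algebra_simps)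
      moreover have "e * (- \<bar>a l \<bullet> d0\<bar>) = - (e * \<bar>a l \<bullet> d0\<bar>)" by simp
      ultimately show ?thesis using yu[of l] by linarith
    qed
    have yunn: "y k u \<ge> 0" if "k < m" for k
    proof (cases "k \<in> T v")
      case True then show ?thesis using yuR yuc e(1) by (cases "k = c") (auto simp: R_def)
    next
      case False then show ?thesis using yubig[OF that False] e(1) by simp
    qed
    have Gpair: "y i u + y j u = e" if "(i,j) \<in> G" for i j
    proof -
      have ij: "(i,j) \<in> \<Gamma>" "i \<in> T v" "j \<in> T v" using that by (auto simp: G_def)
      have "i \<noteq> j" using Gam2(3)[OF ij(1)] by simp
      then consider "i = c" "j \<in> R" | "j = c" "i \<in> R" using c(2) ij by (auto simp: R_def)
      then show ?thesis using yuR yuc by cases auto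
    qed
    have uQ: "u \<in> polyset Kq cq (dq e)" unfolding memQ
    proof (intro conjI)
      show "u \<in> P" using yunn memP by blast
      show "\<forall>(i,j)\<in>\<Gamma>. e \<le> y i u + y j u"
      proof (intro ballI, clarify)
        fix i j assume g: "(i,j) \<in> \<Gamma>"
        have ij: "i < m" "j < m" using Gam2[OF g] by auto
        show "e \<le> y i u + y j u"
        proof (cases "i \<in> T v \<and> j \<in> T v")
          case True then have "(i,j) \<in> G" using g by (simp add: G_def)
          then show ?thesis using Gpair by simp
        next
          case False
          then consider "i \<notin> T v" | "j \<notin> T v" by blast
          then show ?thesis
          proof cases
            case 1 then show ?thesis using yubig[OF ij(1) 1] yunn[OF ij(2)] by linarith
          next
            case 2 then show ?thesis using yubig[OF ij(2) 2] yunn[OF ij(1)] by linarith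
          qed
        qed
      qed
    qed
    have tsub: "Inl ` R \<union> Inr ` G \<subseteq> tight Kq cq (dq e) u"
      unfolding tightQ using yuR Gpair by (auto simp: R_def G_def tight_def)
    have ft: "finite (tight Kq cq (dq e) u)" using finKq by (simp add: tight_def)
    have fG: "finite G" unfolding G_def by (rule finite_subset[OF _ finGam]) auto
    have "card (Inl ` R \<union> Inr ` G :: (nat + nat \<times> nat) set) = card R + card G"
      using fR fG by (subst card_Un_disjoint) (auto simp: card_image)
    then have c4: "card (tight Kq cq (dq e) u) \<ge> 4"
      using card_mono[OF ft tsub] R2 G2 by simp
    have "a ` T v \<subseteq> span (cq ` tight Kq cq (dq e) u)"
    proof
      fix x assume "x \<in> a ` T v"
      then obtain k where k: "k \<in> T v" "x = a k" by blast
      show "x \<in> span (cq ` tight Kq cq (dq e) u)"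
      proof (cases "k = c")
        case False
        then have "Inl k \<in> tight Kq cq (dq e) u" using tsub k by (auto simp: R_def)
        then show ?thesis using k by (intro span_base) (force simp: cq_def)
      next
        case True
        obtain g where g: "g \<in> G" using G2 by (metis card.empty ex_in_conv zero_neq_numeral)
        obtain i j where gij: "g = (i,j)" by (cases g)
        have ij: "(i,j) \<in> \<Gamma>" "i \<in> T v" "j \<in> T v" using g gij by (auto simp: G_def)
        have "i \<noteq> j" using Gam2(3)[OF ij(1)] by simp
        have tG: "Inr (i,j) \<in> tight Kq cq (dq e) u" using tsub g gij by auto
        then have s1: "a i + a j \<in> span (cq ` tight Kq cq (dq e) u)"
          by (intro span_base) (force simp: cq_def)
        consider "i = c" "j \<in> R" | "j = c" "i \<in> R" using c(2) ij \<open>i \<noteq> j\<close> by (auto simp: R_def)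
        then show ?thesis
        proof cases
          case 1
          have "Inl j \<in> tight Kq cq (dq e) u" using tsub 1 by auto
          then have "a j \<in> span (cq ` tight Kq cq (dq e) u)" by (intro span_base) (force simp: cq_def)
          then have "(a i + a j) - a j \<in> span (cq ` tight Kq cq (dq e) u)" using s1 span_diff by blast
          then show ?thesis using 1 k True by simp
        next
          case 2
          have "Inl i \<in> tight Kq cq (dq e) u" using tsub 2 by auto
          then have "a i \<in> span (cq ` tight Kq cq (dq e) u)" by (intro span_base) (force simp: cq_def)
          then have "(a i + a j) - a i \<in> span (cq ` tight Kq cq (dq e) u)" using s1 span_diff by blast
          then show ?thesis using 2 k True by simp
        qed
      qed
    qed
    then have "span (a ` T v) \<subseteq> span (cq ` tight Kq cq (dq e) u)"
      using span_mono span_span by metis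
    then have "span (cq ` tight Kq cq (dq e) u) = UNIV" using vspan[OF v(1)] by auto
    then have uext: "u extreme_point_of polyset Kq cq (dq e)" using span_imp_extreme[OF uQ] by blast
    show "\<not> simple_polytope (graph_trunc a b P \<Gamma> e)"
    proof
      assume "simple_polytope (graph_trunc a b P \<Gamma> e)"
      then have "int (card {F. F facet_of polyset Kq cq (dq e) \<and> u \<in> F}) = aff_dim (polyset Kq cq (dq e))"
        using uext unfolding simple_polytope_def Q_eq by blast
      then show False using Q_card[OF e uQ] Q_dim[OF e(2)] c4 by simp
    qed
  qed
qed

lemma main:
  "(\<exists>\<epsilon>0>0. \<forall>\<epsilon>. 0 < \<epsilon> \<and> \<epsilon> < \<epsilon>0 \<longrightarrow> simple_polytope (graph_trunc a b P \<Gamma> \<epsilon>))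
         \<longleftrightarrow> (\<forall>v. v extreme_point_of P \<longrightarrow> valency a b P \<Gamma> v \<noteq> 2)"
proof
  assume L: "\<exists>\<epsilon>0>0. \<forall>\<epsilon>. 0 < \<epsilon> \<and> \<epsilon> < \<epsilon>0 \<longrightarrow> simple_polytope (graph_trunc a b P \<Gamma> \<epsilon>)"
  then have ev: "eventually (\<lambda>e. simple_polytope (graph_trunc a b P \<Gamma> e)) (at_right 0)"
    by (auto simp: eventually_at_right_field)
  show "\<forall>v. v extreme_point_of P \<longrightarrow> valency a b P \<Gamma> v \<noteq> 2"
  proof (intro allI impI notI)
    fix v assume "v extreme_point_of P" "valency a b P \<Gamma> v = 2"
    from eventually_conj[OF ev notsimple_dir[OF this]]
    obtain t where "t > 0" "simple_polytope (graph_trunc a b P \<Gamma> t) \<and> \<not> simple_polytope (graph_trunc a b P \<Gamma> t)"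
      by (rule eventually_at_right_obtain)
    then show False by blast
  qed
next
  assume R: "\<forall>v. v extreme_point_of P \<longrightarrow> valency a b P \<Gamma> v \<noteq> 2"
  have "eventually (\<lambda>e. simple_polytope (graph_trunc a b P \<Gamma> e)) (at_right 0)"
    using eventually_conj[OF eventually_at_right_less ev_good]
    by (rule eventually_mono) (use simple_dir[OF R] in auto)
  then show "\<exists>\<epsilon>0>0. \<forall>\<epsilon>. 0 < \<epsilon> \<and> \<epsilon> < \<epsilon>0 \<longrightarrow> simple_polytope (graph_trunc a b P \<Gamma> \<epsilon>)"
    by (auto simp: eventually_at_right_field)
qed

end

theorem proposition6:
  fixes m :: nat and a :: "nat \<Rightarrow> real^3" and b :: "nat \<Rightarrow> real"
    and P :: "(real^3) set" and \<Gamma> :: "(nat \<times> nat) set"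
  assumes P_def: "P = ineq_poly m a b"
    and "polytope P" and "aff_dim P = 3"
    and "irredundant m a b"
    and "simple_polytope P"
    and \<Gamma>_edges: "\<forall>(i,j)\<in>\<Gamma>. i < j \<and> j < m \<and>
                     (facet_set a b P i \<inter> facet_set a b P j) edge_of P"
  shows "(\<exists>\<epsilon>0>0. \<forall>\<epsilon>. 0 < \<epsilon> \<and> \<epsilon> < \<epsilon>0 \<longrightarrow> simple_polytope (graph_trunc a b P \<Gamma> \<epsilon>))
         \<longleftrightarrow> (\<forall>v. v extreme_point_of P \<longrightarrow> valency a b P \<Gamma> v \<noteq> 2)"
proof -
  interpret setting m a b P \<Gamma> using assms by unfold_locales
  show ?thesis by (rule main)
qed


end
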